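(* Let $D$ be an integral domain with an identity element and let $\varphi$ be the canonical homomorphism of $D_{mult}$ onto $D'=D_{mult}/\sim$. For every ideal $I$ of $D_{mult}$, $\varphi(\mathrm{Sep}\,I)=\mathrm{Sep}(\varphi(I))$.
   Context: $D_{mult}$ is the multiplicative semigroup of $D$ and $\sim$ the associate congruence. For a subset $A$ of a semigroup $S$: $\mathrm{Id}\,A=\{x\in S: xA\subseteq A,\ Ax\subseteq A\}$ and $\mathrm{Sep}\,A=\mathrm{Id}\,A\cap\mathrm{Id}(S\setminus A)$; $\mathrm{Sep}\,I$ is taken in $D_{mult}$, and $\mathrm{Sep}(\varphi(I))$ in $D'$. *)

theory Defs
  imports Main
begin

definition sg_Id :: "'s set \<Rightarrow> ('s \<Rightarrow> 's \<Rightarrow> 's) \<Rightarrow> 's set \<Rightarrow> 's set" where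
  "sg_Id S m A = {x \<in> S. (\<forall>a\<in>A. m x a \<in> A) \<and> (\<forall>a\<in>A. m a x \<in> A)}"

definition sg_Sep :: "'s set \<Rightarrow> ('s \<Rightarrow> 's \<Rightarrow> 's) \<Rightarrow> 's set \<Rightarrow> 's set" where
  "sg_Sep S m A = sg_Id S m A \<inter> sg_Id S m (S - A)"

definition sg_ideal :: "'s set \<Rightarrow> ('s \<Rightarrow> 's \<Rightarrow> 's) \<Rightarrow> 's set \<Rightarrow> bool" where
  "sg_ideal S m I \<longleftrightarrow> I \<subseteq> S \<and> I \<noteq> {} \<and> (\<forall>s\<in>S. \<forall>a\<in>I. m s a \<in> I \<and> m a s \<in> I)"

definition associated :: "'a::idom \<Rightarrow> 'a \<Rightarrow> bool" where
  "associated a b \<longleftrightarrow> a dvd b \<and> b dvd a"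

definition assoc_class :: "'a::idom \<Rightarrow> 'a set" where
  "assoc_class a = {b. associated a b}"

definition Dquot :: "'a::idom set set" where
  "Dquot = range assoc_class"

definition Dquot_mult :: "'a::idom set \<Rightarrow> 'a set \<Rightarrow> 'a set" where
  "Dquot_mult X Y = assoc_class ((SOME x. x \<in> X) * (SOME y. y \<in> Y))"

end

theory Submission
  imports Defs
begin

lemma ac_eq: "assoc_class a = assoc_class b \<longleftrightarrow> associated a b"
  unfolding assoc_class_def associated_def set_eq_iff
  by (metis dvd_refl dvd_trans mem_Collect_eq)

lemma ac_self: "a \<in> assoc_class a"
  unfolding assoc_class_def associated_def by simp

lemma ac_some: "associated a (SOME x. x \<in> assoc_class a)"
proof -
  have "(SOME x. x \<in> assoc_class a) \<in> assoc_class a" by (rule someI, rule ac_self)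
  thus ?thesis unfolding assoc_class_def by simp
qed

lemma ac_mult: "Dquot_mult (assoc_class a) (assoc_class b) = assoc_class (a*b)"
proof -
  define a' where "a' = (SOME x. x \<in> assoc_class a)"
  define b' where "b' = (SOME x. x \<in> assoc_class b)"
  have "associated a a'" "associated b b'" using ac_some a'_def b'_def by auto
  hence "associated (a'*b') (a*b)" unfolding associated_def by (auto intro: mult_dvd_mono)
  thus ?thesis unfolding Dquot_mult_def a'_def[symmetric] b'_def[symmetric] ac_eq .
qed

lemma ideal_assoc:
  assumes "sg_ideal UNIV (*) I" "a \<in> I" "associated a b"
  shows "b \<in> I"
proof -
  obtain k where "b = a * k" using assms(3) unfolding associated_def by blast
  thus ?thesis using assms(1,2) unfolding sg_ideal_def by auto
qed

lemma ac_in_img: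
  assumes "sg_ideal UNIV (*) I"
  shows "assoc_class a \<in> assoc_class ` I \<longleftrightarrow> a \<in> I"
proof
  assume "assoc_class a \<in> assoc_class ` I"
  then obtain b where "b \<in> I" "assoc_class a = assoc_class b" by auto
  thus "a \<in> I" using ideal_assoc[OF assms] ac_eq
    by (metis associated_def)
qed auto

lemma sep_char:
  fixes I :: "'a::idom set"
  assumes "sg_ideal UNIV (*) I"
  shows "x \<in> sg_Sep UNIV (*) I \<longleftrightarrow> (\<forall>a. a \<notin> I \<longrightarrow> x * a \<notin> I)"
  using assms unfolding sg_Sep_def sg_Id_def sg_ideal_def by (auto simp: mult.commute[of _ x])

lemma qsep_char:
  assumes "sg_ideal UNIV (*) I"
  shows "assoc_class x \<in> sg_Sep Dquot Dquot_mult (assoc_class ` I) \<longleftrightarrow> (\<forall>a. a \<notin> I \<longrightarrow> x * a \<notin> I)"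
proof -
  have ii: "\<And>a. assoc_class a \<in> assoc_class ` I \<longleftrightarrow> a \<in> I" using ac_in_img[OF assms] .
  have sub: "assoc_class ` I \<subseteq> Dquot" unfolding Dquot_def by auto
  show ?thesis
  proof
    assume "assoc_class x \<in> sg_Sep Dquot Dquot_mult (assoc_class ` I)"
    hence h: "\<forall>Y\<in>Dquot - assoc_class ` I. Dquot_mult (assoc_class x) Y \<in> Dquot - assoc_class ` I"
      unfolding sg_Sep_def sg_Id_def by auto
    show "\<forall>a. a \<notin> I \<longrightarrow> x * a \<notin> I"
    proof (intro allI impI)
      fix a assume "a \<notin> I"
      hence "assoc_class a \<in> Dquot - assoc_class ` I" using ii unfolding Dquot_def by auto
      from h[rule_format, OF this] show "x * a \<notin> I" using ii by (simp add: ac_mult)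
    qed
  next
    assume h: "\<forall>a. a \<notin> I \<longrightarrow> x * a \<notin> I"
    have hI: "\<forall>a. a \<in> I \<longrightarrow> x * a \<in> I" using assms unfolding sg_ideal_def by auto
    have "assoc_class x \<in> Dquot" unfolding Dquot_def by auto
    moreover have "\<forall>Y\<in>assoc_class ` I. Dquot_mult (assoc_class x) Y \<in> assoc_class ` I
                 \<and> Dquot_mult Y (assoc_class x) \<in> assoc_class ` I"
      using hI ii by (auto simp: ac_mult mult.commute[of x])
    moreover have "\<forall>Y\<in>Dquot - assoc_class ` I. Dquot_mult (assoc_class x) Y \<in> Dquot - assoc_class ` I
                 \<and> Dquot_mult Y (assoc_class x) \<in> Dquot - assoc_class ` I"
    proof
      fix Y assume "Y \<in> Dquot - assoc_class ` I"
      then obtain a where Y: "Y = assoc_class a" "a \<notin> I" using ii unfolding Dquot_def by auto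
      thus "Dquot_mult (assoc_class x) Y \<in> Dquot - assoc_class ` I
                 \<and> Dquot_mult Y (assoc_class x) \<in> Dquot - assoc_class ` I"
      proof -
        have "x * a \<notin> I" using h Y(2) by blast
        hence "assoc_class (x*a) \<notin> assoc_class ` I" using ii by blast
        thus ?thesis using Y(1) unfolding Dquot_def by (simp add: ac_mult mult.commute[of a])
      qed
    qed
    ultimately show "assoc_class x \<in> sg_Sep Dquot Dquot_mult (assoc_class ` I)"
      unfolding sg_Sep_def sg_Id_def by auto
  qed
qed

theorem lemma4:
  fixes I :: "'a::idom set"
  assumes "sg_ideal UNIV (*) I"
  shows "assoc_class ` (sg_Sep UNIV (*) I) = sg_Sep Dquot Dquot_mult (assoc_class ` I)"
proof
  show "assoc_class ` sg_Sep UNIV (*) I \<subseteq> sg_Sep Dquot Dquot_mult (assoc_class ` I)"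
    using sep_char[OF assms] qsep_char[OF assms] by auto
next
  show "sg_Sep Dquot Dquot_mult (assoc_class ` I) \<subseteq> assoc_class ` sg_Sep UNIV (*) I"
  proof
    fix X assume X: "X \<in> sg_Sep Dquot Dquot_mult (assoc_class ` I)"
    hence "X \<in> Dquot" unfolding sg_Sep_def sg_Id_def by auto
    then obtain x where x: "X = assoc_class x" unfolding Dquot_def by auto
    thus "X \<in> assoc_class ` sg_Sep UNIV (*) I"
      using X sep_char[OF assms] qsep_char[OF assms] by auto
  qed
qed

end
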